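(* Let $\pi_0\in(0,1)$ and let $\psi:[0,1]\to\mathbb{R}$ be non-decreasing with $\psi(0)<\psi(1)$. For $\sigma\in(0,0.25]$ define $$\pi_1(1)=\frac{(1+4\sigma)\pi_0}{1+4\sigma\pi_0},\qquad \pi_1(0)=\frac{(1-4\sigma)\pi_0}{1-4\sigma\pi_0},$$ $$\Psi(\sigma,\pi_0)=(0.5+2\sigma\pi_0)\,\psi(\pi_1(1))+(0.5-2\sigma\pi_0)\,\psi(\pi_1(0)),$$ and $\Delta\Phi(\sigma,\pi_0)=2\sigma\pi_0+\Psi(\sigma,\pi_0)-\psi(\pi_0)$. If $\psi$ is linear or convex, then $\Delta\Phi(\sigma,\pi_0)$ is increasing in $\sigma$.
   Context: Interpretation: $\Delta\Phi(\sigma,\pi_0)$ is the gain in the expert's expected payoff (accuracy plus reputation $\psi$ of the posterior belief about his competence) from choosing a complex rule over a simple rule, where the complex rule yields the correct action with probability $0.5+2\sigma$ if the expert is competent and $0.5$ otherwise, the simple rule yields it with probability $0.5$ and reveals nothing, $\pi_0$ is the prior that the expert is competent, and $\pi_1(Y)$ is the posterior after the complex rule leads to the correct ($Y=1$) or incorrect ($Y=0$) action. *)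

theory Defs
  imports "HOL-Analysis.Analysis"
begin

definition post1 :: "real \<Rightarrow> real \<Rightarrow> real" where
  "post1 \<sigma> \<pi>0 = ((1 + 4*\<sigma>) * \<pi>0) / (1 + 4*\<sigma>*\<pi>0)"

definition post0 :: "real \<Rightarrow> real \<Rightarrow> real" where
  "post0 \<sigma> \<pi>0 = ((1 - 4*\<sigma>) * \<pi>0) / (1 - 4*\<sigma>*\<pi>0)"

definition Psi :: "(real \<Rightarrow> real) \<Rightarrow> real \<Rightarrow> real \<Rightarrow> real" where
  "Psi \<psi> \<sigma> \<pi>0 = (1/2 + 2*\<sigma>*\<pi>0) * \<psi> (post1 \<sigma> \<pi>0) + (1/2 - 2*\<sigma>*\<pi>0) * \<psi> (post0 \<sigma> \<pi>0)"

definition DeltaPhi :: "(real \<Rightarrow> real) \<Rightarrow> real \<Rightarrow> real \<Rightarrow> real" where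
  "DeltaPhi \<psi> \<sigma> \<pi>0 = 2*\<sigma>*\<pi>0 + Psi \<psi> \<sigma> \<pi>0 - \<psi> \<pi>0"

end

theory Submission
  imports Defs
begin
lemma key:
  fixes f :: "real \<Rightarrow> real"
  assumes cv: "convex_on {0..1} f" and "0 \<le> a" "a < b" "b \<le> 1" "a \<le> z0" "z0 \<le> z1" "z1 \<le> b"
    and "q0 \<ge> 0" "q1 \<ge> 0" "q1*z1 + q0*z0 = m" "q1 + q0 = 1" "p*b + (1-p)*a = m"
  shows "q1 * f z1 + q0 * f z0 \<le> p * f b + (1-p) * f a"
proof -
  have cab: "convex_on {a..b} f" using cv assms by (auto intro: convex_on_subset)
  define k where "k = (f b - f a) / (b - a)"
  have h1: "f z1 \<le> k * (z1 - a) + f a" unfolding k_def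
    using convex_onD_Icc'[OF cab, of z1] assms by auto
  have h0: "f z0 \<le> k * (z0 - a) + f a" unfolding k_def
    using convex_onD_Icc'[OF cab, of z0] assms by auto
  have "q1 * f z1 + q0 * f z0 \<le> q1 * (k * (z1 - a) + f a) + q0 * (k * (z0 - a) + f a)"
    using h1 h0 assms by (intro add_mono mult_left_mono) auto
  also have "\<dots> = k * (q1*z1 + q0*z0 - (q1+q0)*a) + (q1+q0) * f a" by (simp add: algebra_simps)
  also have "\<dots> = k * (m - a) + f a" using assms(10,11) by simp
  also have "\<dots> = p * f b + (1-p) * f a"
  proof -
    have e1: "p * (b - a) = m - a" using assms(12) by (simp add: algebra_simps)
    have e2: "k * (b - a) = f b - f a" unfolding k_def using assms(3) by simp
    have "k * (m - a) = p * (k * (b - a))" using e1 by (metis mult.left_commute)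
    also have "\<dots> = p * (f b - f a)" using e2 by simp
    finally show ?thesis by (simp add: algebra_simps)
  qed
  finally show ?thesis .
qed

lemma mp:
  fixes x p :: real
  assumes "1 - 4 * x * p > 0" "1 + 4 * x * p > 0"
  shows "(1/2 + 2 * x * p) * post1 x p + (1/2 - 2 * x * p) * post0 x p = p"
proof -
  have a: "(1/2 + 2 * x * p) * post1 x p = (1 + 4 * x) * p / 2"
    unfolding post1_def using assms(2) by (simp add: field_simps)
  have b: "(1/2 - 2 * x * p) * post0 x p = (1 - 4 * x) * p / 2"
    unfolding post0_def using assms(1) by (simp add: field_simps)
  show ?thesis unfolding a b by (simp add: field_simps)
qed

theorem proposition2:
  fixes \<psi> :: "real \<Rightarrow> real" and \<pi>0 :: real
  assumes "0 < \<pi>0" and "\<pi>0 < 1"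
    and "mono_on {0..1} \<psi>" and "\<psi> 0 < \<psi> 1"
    and "(\<exists>a b. \<forall>x\<in>{0..1}. \<psi> x = a + b * x) \<or> convex_on {0..1} \<psi>"
  shows "strict_mono_on {0<..1/4} (\<lambda>\<sigma>. DeltaPhi \<psi> \<sigma> \<pi>0)"
proof -
  have cv: "convex_on {0..1} \<psi>"
    using assms(5)
  proof
    assume "\<exists>a b. \<forall>x\<in>{0..1}. \<psi> x = a + b * x"
    then obtain a b where ab: "\<forall>x\<in>{0..1}. \<psi> x = a + b * x" by blast
    show ?thesis
      unfolding convex_on_def
    proof (intro conjI allI impI ballI)
      fix x y u v :: real assume xy: "x \<in> {0..1}" "y \<in> {0..1}" and uv: "u \<ge> 0" "v \<ge> 0" "u + v = 1"
      have m: "u * x + v * y \<in> {0..1}" using xy uv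
        by (auto simp: convex_bound_le[of x 1 y u v, simplified] intro: add_nonneg_nonneg)
      have "a = u * a + v * a" using uv by (metis distrib_right mult_1)
      then show "\<psi> (u *\<^sub>R x + v *\<^sub>R y) \<le> u * \<psi> x + v * \<psi> y"
        using ab m xy by (simp add: algebra_simps)
    qed simp
  qed
  show ?thesis
  proof (rule strict_mono_onI)
    fix s t :: real assume s: "s \<in> {0<..1/4}" and t: "t \<in> {0<..1/4}" and st: "s < t"
    have sp: "s * \<pi>0 \<le> 1/4 * \<pi>0" "t * \<pi>0 \<le> 1/4 * \<pi>0" using s t assms(1)
      by (auto intro: mult_right_mono)
    have d1: "1 - 4* s *\<pi>0 > 0" "1 - 4* t *\<pi>0 > 0" "1 + 4* s *\<pi>0 > 0" "1 + 4* t *\<pi>0 > 0"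
    proof -
      have "0 < s * \<pi>0" "0 < t * \<pi>0" using s t assms(1) by auto
      then show "1 - 4 * s * \<pi>0 > 0" "1 - 4 * t * \<pi>0 > 0" "1 + 4 * s * \<pi>0 > 0" "1 + 4 * t * \<pi>0 > 0"
        using sp assms(2) by linarith+
    qed
    have h1: "t*\<pi>0*(1-\<pi>0) > 0" "s*\<pi>0*(1-\<pi>0) > 0" using s t assms(1,2) by auto
    have h2: "(t-s)*\<pi>0*(1-\<pi>0) \<ge> 0" using st assms(1,2) by auto
    have f1: "0 \<le> post0 t \<pi>0" unfolding post0_def using d1 t assms(1) by auto
    have f2a: "post0 t \<pi>0 < \<pi>0" unfolding post0_def using d1 h1
      by (simp add: divide_simps algebra_simps)
    have f2b: "\<pi>0 < post1 t \<pi>0" unfolding post1_def using d1 h1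
      by (simp add: divide_simps algebra_simps)
    have f3: "post1 t \<pi>0 \<le> 1" unfolding post1_def using d1 t assms(1,2)
      by (simp add: divide_simps algebra_simps)
    have f4: "post0 t \<pi>0 \<le> post0 s \<pi>0" unfolding post0_def using d1 h2
      by (simp add: divide_simps algebra_simps)
    have f5a: "post0 s \<pi>0 \<le> \<pi>0" unfolding post0_def using d1 h1
      by (simp add: divide_simps algebra_simps)
    have f5b: "\<pi>0 \<le> post1 s \<pi>0" unfolding post1_def using d1 h1
      by (simp add: divide_simps algebra_simps)
    have f6: "post1 s \<pi>0 \<le> post1 t \<pi>0" unfolding post1_def using d1 h2
      by (simp add: divide_simps algebra_simps)
    have f7: "1/2 - 2* s *\<pi>0 \<ge> 0" "1/2 + 2* s *\<pi>0 \<ge> 0" using d1 by auto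
    have f8: "(1/2 + 2* s *\<pi>0) * post1 s \<pi>0 + (1/2 - 2* s *\<pi>0) * post0 s \<pi>0 = \<pi>0"
      using mp[of s \<pi>0] d1 by simp
    have f9: "(1/2 + 2* t *\<pi>0) * post1 t \<pi>0 + (1 - (1/2 + 2* t *\<pi>0)) * post0 t \<pi>0 = \<pi>0"
      using mp[of t \<pi>0] d1 by simp
    have f2: "post0 t \<pi>0 < post1 t \<pi>0" using f2a f2b by linarith
    have f5: "post0 s \<pi>0 \<le> post1 s \<pi>0" using f5a f5b by linarith
    have K: "(1/2 + 2* s *\<pi>0) * \<psi> (post1 s \<pi>0) + (1/2 - 2* s *\<pi>0) * \<psi> (post0 s \<pi>0)
       \<le> (1/2 + 2* t *\<pi>0) * \<psi> (post1 t \<pi>0) + (1 - (1/2 + 2* t *\<pi>0)) * \<psi> (post0 t \<pi>0)"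
      by (rule key[OF cv f1 f2 f3 f4 f5 f6 f7(1) f7(2) f8 _ f9]) simp
    have "Psi \<psi> s \<pi>0 \<le> Psi \<psi> t \<pi>0" unfolding Psi_def using K by simp
    moreover have "2* s *\<pi>0 < 2* t *\<pi>0" using st assms(1) by simp
    ultimately show "DeltaPhi \<psi> s \<pi>0 < DeltaPhi \<psi> t \<pi>0" unfolding DeltaPhi_def by simp
  qed
qed
end
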